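(* Let $k\geq 2$ be an integer and let $A=[\bm{a}_1,\dots,\bm{a}_n]\in\mathbb{R}^{m\times n}$ have columns with $\|\bm{a}_i\|_2=1$ for all $i$, and suppose its mutual coherence $\mu=\max_{1\leq i<j\leq n}|\langle \bm{a}_i,\bm{a}_j\rangle|$ satisfies $$\mu<\frac{1}{k-1}.$$ Then for every vector $\bm{h}\in\mathbb{R}^n$ and every subset $E\subset\{1,\dots,n\}$ with $|E|=k$, $$\|\bm{h}_E\|_2\leq \alpha_1\|A\bm{h}\|_2+\alpha_2\|\bm{h}_{E^c}\|_1,$$ where $$\alpha_1=\frac{\sqrt{1+(k-1)\mu}}{1-(k-1)\mu},\qquad \alpha_2=\frac{\sqrt{k}\,\mu}{1-(k-1)\mu}.$$
   Context: For $E\subset\{1,\dots,n\}$, $E^c=\{1,\dots,n\}\setminus E$, and for a vector $\bm{h}\in\mathbb{R}^n$, $\bm{h}_E$ denotes the vector with $(\bm{h}_E)_i=\bm{h}_i$ for $i\in E$ and $(\bm{h}_E)_i=0$ otherwise. *)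

theory Defs
  imports "HOL-Analysis.Analysis"
begin

text \<open>The 0 is included only so that Max is well defined when there is a single column
  (all inner products are nonnegative in absolute value, so it does not change the value otherwise).\<close>
definition mutual_coherence :: "real^'n^'m \<Rightarrow> real" where
  "mutual_coherence A = Max ({0} \<union> {\<bar>column i A \<bullet> column j A\<bar> | i j. i \<noteq> j})"

definition restrict_vec :: "real^'n \<Rightarrow> 'n set \<Rightarrow> real^'n" where
  "restrict_vec h E = (\<chi> i. if i \<in> E then h $ i else 0)"

definition l1norm :: "real^'n \<Rightarrow> real" where
  "l1norm h = (\<Sum>i\<in>UNIV. \<bar>h $ i\<bar>)"

end

theory Submission
  imports Defs
begin

lemma inner_Av:
  fixes A :: "real^'n^'m"
  shows "(A *v x) \<bullet> (A *v y) = (\<Sum>i\<in>UNIV. \<Sum>j\<in>UNIV. x$i * y$j * (column i A \<bullet> column j A))"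
  unfolding matrix_mult_sum
  apply (simp add: inner_sum_left inner_sum_right scalar_mult_eq_scaleR sum_distrib_left mult.assoc)
  apply (subst sum.swap)
  apply (simp add: mult.left_commute)
  done

lemma diag_split:
  fixes f :: "'n::finite \<Rightarrow> 'n \<Rightarrow> real"
  shows "(\<Sum>i\<in>UNIV. \<Sum>j\<in>UNIV. f i j) = (\<Sum>i\<in>UNIV. f i i) + (\<Sum>i\<in>UNIV. \<Sum>j\<in>UNIV. if i = j then 0 else f i j)"
proof -
  have "\<And>i. (\<Sum>j\<in>UNIV. f i j) = f i i + (\<Sum>j\<in>UNIV. if i = j then 0 else f i j)"
  proof -
    fix i
    have "(\<Sum>j\<in>UNIV. f i j) = (\<Sum>j\<in>UNIV. (if i = j then f i j else 0) + (if i = j then 0 else f i j))"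
      by (rule sum.cong) auto
    also have "\<dots> = f i i + (\<Sum>j\<in>UNIV. if i = j then 0 else f i j)"
      by (simp add: sum.distrib)
    finally show "(\<Sum>j\<in>UNIV. f i j) = f i i + (\<Sum>j\<in>UNIV. if i = j then 0 else f i j)" .
  qed
  then show ?thesis by (simp add: sum.distrib)
qed

lemma coh_facts:
  fixes A :: "real^'n^'m"
  shows "mutual_coherence A \<ge> 0"
    and "i \<noteq> j \<Longrightarrow> \<bar>column i A \<bullet> column j A\<bar> \<le> mutual_coherence A"
proof -
  let ?S = "{0} \<union> {\<bar>column i A \<bullet> column j A\<bar> | i j. i \<noteq> j}"
  have "{\<bar>column i A \<bullet> column j A\<bar> | i j. i \<noteq> j} \<subseteq> (\<lambda>(i,j). \<bar>column i A \<bullet> column j A\<bar>) ` UNIV"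
    by auto
  then have fin: "finite ?S" using finite_subset[OF _ finite_imageI[OF finite]] by auto
  show "mutual_coherence A \<ge> 0" unfolding mutual_coherence_def
    using fin by (intro Max_ge) auto
  assume "i \<noteq> j"
  then show "\<bar>column i A \<bullet> column j A\<bar> \<le> mutual_coherence A" unfolding mutual_coherence_def
    using fin by (intro Max_ge) auto
qed


lemma quad_bound:
  fixes A :: "real^'n^'m"
  assumes cols: "\<forall>i. norm (column i A) = 1"
  shows "\<bar>(A *v x) \<bullet> (A *v x) - (\<Sum>i\<in>UNIV. (x$i)^2)\<bar>
           \<le> mutual_coherence A * ((\<Sum>i\<in>UNIV. \<bar>x$i\<bar>)^2 - (\<Sum>i\<in>UNIV. (x$i)^2))"
proof -
  let ?G = "\<lambda>i j. column i A \<bullet> column j A"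
  let ?mu = "mutual_coherence A"
  have Gii: "?G i i = 1" for i using cols by (simp add: dot_square_norm)
  have e1: "(A *v x) \<bullet> (A *v x) - (\<Sum>i\<in>UNIV. (x$i)^2)
      = (\<Sum>i\<in>UNIV. \<Sum>j\<in>UNIV. if i = j then 0 else x$i * x$j * ?G i j)"
    unfolding inner_Av diag_split[of "\<lambda>i j. x$i * x$j * ?G i j"]
    by (simp add: Gii power2_eq_square)
  have e2: "(\<Sum>i\<in>UNIV. \<bar>x$i\<bar>)^2 - (\<Sum>i\<in>UNIV. (x$i)^2)
      = (\<Sum>i\<in>UNIV. \<Sum>j\<in>UNIV. if i = j then 0 else \<bar>x$i\<bar> * \<bar>x$j\<bar>)"
  proof -
    have "(\<Sum>i\<in>UNIV. \<bar>x$i\<bar>)^2 = (\<Sum>i\<in>UNIV. \<Sum>j\<in>UNIV. \<bar>x$i\<bar> * \<bar>x$j\<bar>)"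
      by (simp add: power2_eq_square sum_product)
    then show ?thesis unfolding diag_split[of "\<lambda>i j. \<bar>x$i\<bar> * \<bar>x$j\<bar>"]
      by (simp add: power2_eq_square)
  qed
  have "\<bar>\<Sum>i\<in>UNIV. \<Sum>j\<in>UNIV. if i = j then 0 else x$i * x$j * ?G i j\<bar>
      \<le> (\<Sum>i\<in>UNIV. \<Sum>j\<in>UNIV. \<bar>if i = j then 0 else x$i * x$j * ?G i j\<bar>)"
    by (rule order_trans[OF sum_abs sum_mono]) (rule sum_abs)
  also have "\<dots> \<le> (\<Sum>i\<in>UNIV. \<Sum>j\<in>UNIV. ?mu * (if i = j then 0 else \<bar>x$i\<bar> * \<bar>x$j\<bar>))"
  proof (intro sum_mono)
    fix i j
    show "\<bar>if i = j then 0 else x$i * x$j * ?G i j\<bar> \<le> ?mu * (if i = j then 0 else \<bar>x$i\<bar> * \<bar>x$j\<bar>)"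
    proof (cases "i = j")
      case False
      have "\<bar>?G i j\<bar> \<le> ?mu" using coh_facts(2)[OF False] .
      then have "\<bar>x$i * x$j\<bar> * \<bar>?G i j\<bar> \<le> \<bar>x$i * x$j\<bar> * ?mu"
        by (intro mult_left_mono) auto
      then show ?thesis using False by (simp add: abs_mult mult_ac)
    qed simp
  qed
  also have "\<dots> = ?mu * (\<Sum>i\<in>UNIV. \<Sum>j\<in>UNIV. if i = j then 0 else \<bar>x$i\<bar> * \<bar>x$j\<bar>)"
    by (simp add: sum_distrib_left)
  finally show ?thesis using e1 e2 by simp
qed

theorem lemma3:
  fixes A :: "real^'n^'m" and k :: nat
  assumes "k \<ge> 2"
    and "\<forall>i. norm (column i A) = 1"
    and "mutual_coherence A < 1 / (real k - 1)"
  shows "\<forall>(h::real^'n) E. card E = k \<longrightarrow>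
           norm (restrict_vec h E) \<le>
             sqrt (1 + (real k - 1) * mutual_coherence A) / (1 - (real k - 1) * mutual_coherence A) * norm (A *v h)
           + sqrt (real k) * mutual_coherence A / (1 - (real k - 1) * mutual_coherence A) * l1norm (restrict_vec h (- E))"
proof (intro allI impI)
  fix h :: "real^'n" and E :: "'n set"
  assume cE: "card E = k"
  let ?mu = "mutual_coherence A"
  define u where "u = restrict_vec h E"
  define v where "v = restrict_vec h (- E)"
  define c where "c = 1 - (real k - 1) * ?mu"
  define N where "N = norm u"
  define P where "P = norm (A *v h)"
  define L where "L = l1norm v"
  define Lu where "Lu = l1norm u"
  have mu0: "?mu \<ge> 0" by (rule coh_facts(1))
  have k1: "real k - 1 > 0" using assms(1) by simp
  have "(real k - 1) * ?mu < 1"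
    using assms(3) k1 by (simp add: field_simps)
  then have c0: "c > 0" unfolding c_def by simp
  have huv: "h = u + v" unfolding u_def v_def restrict_vec_def by (simp add: vec_eq_iff)
  have uv0: "u$i * v$i = 0" for i unfolding u_def v_def restrict_vec_def by simp
  have finE: "finite E" using finite by blast
  have sq: "(\<Sum>i\<in>UNIV. (u$i)^2) = N^2"
    unfolding N_def power2_norm_eq_inner inner_vec_def by (simp add: power2_eq_square)
  have LuE: "Lu = (\<Sum>i\<in>E. \<bar>h$i\<bar>)"
    unfolding Lu_def l1norm_def u_def restrict_vec_def
    by (simp add: sum.If_cases[OF finite] if_distrib cong: if_cong)
  have sqE: "(\<Sum>i\<in>UNIV. (u$i)^2) = (\<Sum>i\<in>E. (h$i)^2)"
  proof -
    have "(\<Sum>i\<in>UNIV. (u$i)^2) = (\<Sum>i\<in>UNIV. if i \<in> E then (h$i)^2 else 0)"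
      unfolding u_def restrict_vec_def by (rule sum.cong) auto
    also have "\<dots> = (\<Sum>i\<in>E. (h$i)^2)" by (simp add: sum.If_cases[OF finite])
    finally show ?thesis .
  qed
  have "Lu^2 \<le> N^2 * real k"
    using sum_squared_le_sum_of_squares[of "\<lambda>i. \<bar>h$i\<bar>" E] LuE sqE sq cE by simp
  then have LuN: "Lu \<le> sqrt (real k) * N"
    by (metis N_def norm_ge_zero real_sqrt_abs real_sqrt_le_mono real_sqrt_mult abs_of_nonneg mult.commute order_trans abs_ge_self)
  have Lu_abs: "(\<Sum>i\<in>UNIV. \<bar>u$i\<bar>) = Lu" unfolding Lu_def l1norm_def ..
  have Lu_sq: "Lu^2 - N^2 \<le> (real k - 1) * N^2"
    using \<open>Lu^2 \<le> N^2 * real k\<close> by (simp add: algebra_simps)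
  have qb: "\<bar>(A *v u) \<bullet> (A *v u) - N^2\<bar> \<le> ?mu * (Lu^2 - N^2)"
    using quad_bound[OF assms(2), of u] sq Lu_abs by simp
  have muLu: "?mu * (Lu^2 - N^2) \<le> ?mu * ((real k - 1) * N^2)"
    using Lu_sq mu0 by (rule mult_left_mono)
  have low: "c * N^2 \<le> (A *v u) \<bullet> (A *v u)"
    using qb muLu unfolding c_def by (simp add: algebra_simps)
  have up: "(A *v u) \<bullet> (A *v u) \<le> (1 + (real k - 1) * ?mu) * N^2"
    using qb muLu by (simp add: algebra_simps)
  have normAu: "norm (A *v u) \<le> sqrt (1 + (real k - 1) * ?mu) * N"
  proof -
    have "norm (A *v u) = sqrt ((A *v u) \<bullet> (A *v u))" by (simp add: norm_eq_sqrt_inner)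
    also have "\<dots> \<le> sqrt ((1 + (real k - 1) * ?mu) * N^2)" using up by simp
    also have "\<dots> = sqrt (1 + (real k - 1) * ?mu) * N"
      by (simp add: real_sqrt_mult N_def)
    finally show ?thesis .
  qed
  have cross: "\<bar>(A *v u) \<bullet> (A *v v)\<bar> \<le> ?mu * Lu * L"
  proof -
    have "\<bar>(A *v u) \<bullet> (A *v v)\<bar> \<le> (\<Sum>i\<in>UNIV. \<Sum>j\<in>UNIV. \<bar>u$i * v$j * (column i A \<bullet> column j A)\<bar>)"
      unfolding inner_Av by (rule order_trans[OF sum_abs sum_mono]) (rule sum_abs)
    also have "\<dots> \<le> (\<Sum>i\<in>UNIV. \<Sum>j\<in>UNIV. ?mu * (\<bar>u$i\<bar> * \<bar>v$j\<bar>))"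
    proof (intro sum_mono)
      fix i j
      show "\<bar>u$i * v$j * (column i A \<bullet> column j A)\<bar> \<le> ?mu * (\<bar>u$i\<bar> * \<bar>v$j\<bar>)"
      proof (cases "i = j")
        case False
        have "\<bar>column i A \<bullet> column j A\<bar> \<le> ?mu" using coh_facts(2)[OF False] .
        then have "\<bar>u$i * v$j\<bar> * \<bar>column i A \<bullet> column j A\<bar> \<le> \<bar>u$i * v$j\<bar> * ?mu"
          by (intro mult_left_mono) auto
        then show ?thesis by (simp add: abs_mult mult_ac)
      next
        case True
        then show ?thesis using uv0[of i] mu0 by auto
      qed
    qed
    also have "\<dots> = ?mu * Lu * L"
      unfolding Lu_def L_def l1norm_def by (simp add: sum_distrib_left sum_product mult_ac)
    finally show ?thesis .
  qed
  have "(A *v u) \<bullet> (A *v u) = (A *v u) \<bullet> (A *v h) - (A *v u) \<bullet> (A *v v)"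
    unfolding huv by (simp add: matrix_vector_right_distrib inner_add_right)
  also have "\<dots> \<le> norm (A *v u) * P + ?mu * Lu * L"
    using cross norm_cauchy_schwarz[of "A *v u" "A *v h"] unfolding P_def by linarith
  also have "\<dots> \<le> sqrt (1 + (real k - 1) * ?mu) * N * P + ?mu * (sqrt (real k) * N) * L"
  proof (intro add_mono mult_right_mono mult_left_mono)
    show "0 \<le> L" unfolding L_def l1norm_def by (simp add: sum_nonneg)
  qed (use normAu LuN mu0 P_def in auto)
  finally have main: "c * N^2 \<le> N * (sqrt (1 + (real k - 1) * ?mu) * P + sqrt (real k) * ?mu * L)"
    using low by (simp add: algebra_simps)
  show "norm (restrict_vec h E) \<le>
             sqrt (1 + (real k - 1) * ?mu) / (1 - (real k - 1) * ?mu) * norm (A *v h)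
           + sqrt (real k) * ?mu / (1 - (real k - 1) * ?mu) * l1norm (restrict_vec h (- E))"
  proof (cases "N = 0")
    case True
    have "0 \<le> L" unfolding L_def l1norm_def by (simp add: sum_nonneg)
    then show ?thesis using True c0 mu0 unfolding N_def u_def c_def[symmetric] P_def[symmetric]
      L_def[symmetric] v_def[symmetric]
      using k1 by (simp add: P_def)
  next
    case False
    then have Np: "N > 0" unfolding N_def by simp
    have "c * N \<le> sqrt (1 + (real k - 1) * ?mu) * P + sqrt (real k) * ?mu * L"
      using main Np by (simp add: power2_eq_square mult.assoc[symmetric] mult.commute[of c])
    then have "N \<le> (sqrt (1 + (real k - 1) * ?mu) * P + sqrt (real k) * ?mu * L) / c"
      using c0 by (simp add: field_simps)
    then show ?thesis unfolding N_def u_def c_def[symmetric] P_def[symmetric]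
      L_def[symmetric] v_def[symmetric] by (simp add: add_divide_distrib)
  qed
qed

end
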